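(* Let $r,\sigma,s,c,\lambda,a,q,d,\gamma,b>0$ with $a<\lambda$, $b<\gamma$, $1-\lambda r>0$, $1-br>0$, and $\theta=\sqrt{2r/\sigma^2}$. For $w>1$ let $$G(w)=\frac{(1-\lambda r)\big((\ln w-1)w^2+\ln w+1\big)-cr\theta(w^2+1)}{\theta(1-ar)(w-1)^2}+\frac{s}{1-ar}-\frac{q}{1-br}-\frac{w+1}{\theta(w-1)}-\frac{2\big(\theta rd-(1-\gamma r)\ln w\big)w}{\theta(1-br)(w-1)^2}.$$ Assume there exists $\hat w>1$ with $G(\hat w)=0$ and $$(1-\lambda r)(\hat w-\hat w\ln\hat w-1)+cr\theta\hat w>0.$$ Let $\bar x_2=\frac{q}{1-br}+\frac{\hat w+1}{\theta(\hat w-1)}+\frac{2(\theta rd-(1-\gamma r)\ln\hat w)\hat w}{\theta(1-br)(\hat w-1)^2}$, $\bar x_1=\bar x_2-\frac{\ln\hat w}{\theta}$, $$C_{11}=\frac{e^{-\theta\bar x_1}}{2}\Big[(a-\lambda)\bar x_2-\Big(\bar x_1+\frac1\theta\Big)\frac{1-\lambda r}{r}-c+\frac sr\Big],\quad C_{12}=\frac{e^{\theta\bar x_1}}{2}\Big[(a-\lambda)\bar x_2-\Big(\bar x_1-\frac1\theta\Big)\frac{1-\lambda r}{r}-c+\frac sr\Big],$$ $\varphi_1(x)=C_{11}e^{\theta x}+C_{12}e^{-\theta x}+\frac{x-s}{r}$, and $$W_1(x)=\begin{cases}ax & x\ge\bar x_2\\ \varphi_1(x)&\bar x_1<x<\bar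 x_2\\ a\bar x_2-c-\lambda(\bar x_2-x)&x\le\bar x_1.\end{cases}$$ For $x\in\mathbb{R}$ let $\mathcal{M}W_1(x)=\sup_{\delta\ge0}\{W_1(x+\delta)-c-\lambda\delta\}$. Then for each $x$ the maximizer over $\delta\ge0$ of $W_1(x+\delta)-c-\lambda\delta$ is unique and equals $\delta(x)=(\bar x_2-x)\mathbf{1}_{(-\infty,\bar x_2]}(x)$, and $$\{\mathcal{M}W_1-W_1<0\}=(\bar x_1,\infty),\qquad\{\mathcal{M}W_1-W_1=0\}=(-\infty,\bar x_1].$$
   Context: This is the candidate equilibrium payoff of player P1 in the second type of Nash equilibrium (P1 forces P2 to stop) of a linear impulse controller–stopper game: state $X_t=x+\sigma W_t+\sum_{\tau_n\le t}\delta_n$, P1 pays $c+\lambda|\delta|$ per impulse $\delta\ge0$, receives running payoff $x-s$ and terminal payoff $ax$, discounted at rate $r$. *)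

theory Defs
  imports Complex_Main
begin

text \<open>Parameters: r, s, c, lam (= lambda), a, q, d, gam (= gamma), b; th stands for
  theta = sqrt(2 r / sigma^2).\<close>

definition Gfun :: "real \<Rightarrow> real \<Rightarrow> real \<Rightarrow> real \<Rightarrow> real \<Rightarrow> real \<Rightarrow> real \<Rightarrow> real \<Rightarrow> real \<Rightarrow> real \<Rightarrow> real \<Rightarrow> real" where
  "Gfun r th s c lam a q d gam b w =
     ((1 - lam*r) * ((ln w - 1) * w^2 + ln w + 1) - c*r*th*(w^2 + 1)) / (th*(1 - a*r)*(w - 1)^2)
     + s/(1 - a*r) - q/(1 - b*r) - (w + 1)/(th*(w - 1))
     - 2*(th*r*d - (1 - gam*r)*ln w)*w / (th*(1 - b*r)*(w - 1)^2)"

definition xbar2 :: "real \<Rightarrow> real \<Rightarrow> real \<Rightarrow> real \<Rightarrow> real \<Rightarrow> real \<Rightarrow> real \<Rightarrow> real" where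
  "xbar2 r th q d gam b w =
     q/(1 - b*r) + (w + 1)/(th*(w - 1)) + 2*(th*r*d - (1 - gam*r)*ln w)*w / (th*(1 - b*r)*(w - 1)^2)"

definition xbar1 :: "real \<Rightarrow> real \<Rightarrow> real \<Rightarrow> real \<Rightarrow> real \<Rightarrow> real \<Rightarrow> real \<Rightarrow> real" where
  "xbar1 r th q d gam b w = xbar2 r th q d gam b w - ln w / th"

definition C11 :: "real \<Rightarrow> real \<Rightarrow> real \<Rightarrow> real \<Rightarrow> real \<Rightarrow> real \<Rightarrow> real \<Rightarrow> real \<Rightarrow> real" where
  "C11 r th s c lam a x1 x2 =
     exp (- th*x1) / 2 * ((a - lam)*x2 - (x1 + 1/th)*((1 - lam*r)/r) - c + s/r)"

definition C12 :: "real \<Rightarrow> real \<Rightarrow> real \<Rightarrow> real \<Rightarrow> real \<Rightarrow> real \<Rightarrow> real \<Rightarrow> real \<Rightarrow> real" where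
  "C12 r th s c lam a x1 x2 =
     exp (th*x1) / 2 * ((a - lam)*x2 - (x1 - 1/th)*((1 - lam*r)/r) - c + s/r)"

definition phi1 :: "real \<Rightarrow> real \<Rightarrow> real \<Rightarrow> real \<Rightarrow> real \<Rightarrow> real \<Rightarrow> real \<Rightarrow> real \<Rightarrow> real \<Rightarrow> real" where
  "phi1 r th s c lam a x1 x2 x =
     C11 r th s c lam a x1 x2 * exp (th*x) + C12 r th s c lam a x1 x2 * exp (- th*x) + (x - s)/r"

definition W1 :: "real \<Rightarrow> real \<Rightarrow> real \<Rightarrow> real \<Rightarrow> real \<Rightarrow> real \<Rightarrow> real \<Rightarrow> real \<Rightarrow> real \<Rightarrow> real" where
  "W1 r th s c lam a x1 x2 x =
     (if x2 \<le> x then a*x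
      else if x1 < x then phi1 r th s c lam a x1 x2 x
      else a*x2 - c - lam*(x2 - x))"

definition Mop :: "(real \<Rightarrow> real) \<Rightarrow> real \<Rightarrow> real \<Rightarrow> real \<Rightarrow> real" where
  "Mop f c lam x = Sup ((\<lambda>\<delta>. f (x + \<delta>) - c - lam*\<delta>) ` {0..})"

end

theory Submission
  imports Defs
begin

lemma g_bounds:
  fixes P k L w c :: real
  assumes w: "w > 1" and L: "L = ln w" and k: "k > 0" and c: "c > 0"
    and P: "P = (2*c*w + k*(w^2 - 1 - 2*L*w)) / (w-1)^2"
    and hyp: "c*w + k*(w - w*L - 1) > 0"
  defines "g \<equiv> \<lambda>u. P*((exp u + exp (-u))/2 - 1) - k*((exp u - exp (-u))/2 - u)"
  shows "g 0 = 0" "g L = c" "\<And>u. 0 < u \<Longrightarrow> u < L \<Longrightarrow> 0 < g u \<and> g u < c"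
proof -
  show "g 0 = 0" unfolding g_def by simp
  have w0: "(w-1)^2 > 0" using w by simp
  have eL: "exp L = w" "exp (-L) = 1/w" using w L by (simp_all add: exp_minus inverse_eq_divide)
  have wn: "w - 1 \<noteq> 0" "w \<noteq> 0" using w by auto
  show gL: "g L = c" unfolding g_def eL P using wn
    by (simp add: field_simps) (simp add: algebra_simps power2_eq_square)
  have lnle: "L \<le> w - 1" using L ln_le_minus_one w by simp
  have fw: "P*(w+1) - k*(w-1) > 0"
  proof -
    have "P*(w+1) - k*(w-1) = 2*w*(c*(w+1) + k*(2*(w-1) - L*(w+1))) / (w-1)^2"
      unfolding P using w0 by (simp add: field_simps power2_eq_square)
    moreover have "c*(w+1) + k*(2*(w-1) - L*(w+1)) > 0"
    proof -
      have "c*(w+1) + k*(2*(w-1) - L*(w+1)) = (c*w + k*(w - w*L - 1)) + (c + k*(w-1-L))"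
        by (simp add: algebra_simps)
      moreover have "c + k*(w-1-L) > 0" using c k lnle by (simp add: add_pos_nonneg)
      ultimately show ?thesis using hyp by linarith
    qed
    ultimately show ?thesis using w w0 by simp
  qed
  have Ppos: "P > 0"
  proof (rule ccontr)
    assume "\<not> P > 0"
    hence "P*(w+1) \<le> 0" using w by (simp add: mult_nonpos_nonneg)
    moreover have "k*(w-1) > 0" using k w by simp
    ultimately show False using fw by linarith
  qed
  have der: "\<And>u. DERIV g u :> P*((exp u - exp (-u))/2) - k*((exp u + exp (-u))/2 - 1)"
    unfolding g_def by (auto intro!: derivative_eq_intros simp: field_simps)
  have derpos: "P*((exp u - exp (-u))/2) - k*((exp u + exp (-u))/2 - 1) > 0"
    if "0 < u" "u \<le> L" for u
  proof -
    define t where "t = exp u"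
    have t1: "t > 1" using that t_def by simp
    have tw: "t \<le> w" using that t_def eL(1) by (metis exp_le_cancel_iff)
    have em: "exp (-u) = 1/t" using t_def by (simp add: exp_minus inverse_eq_divide)
    have aff: "P*(t+1) - k*(t-1) > 0"
    proof -
      have "P*(t+1) - k*(t-1) = ((w - t)*(2*P) + (t-1)*(P*(w+1) - k*(w-1))) / (w-1)"
        using w by (simp add: field_simps)
      moreover have "(w - t)*(2*P) + (t-1)*(P*(w+1) - k*(w-1)) > 0"
        using tw t1 Ppos fw by (simp add: add_nonneg_pos mult_nonneg_nonneg)
      ultimately show ?thesis using w by simp
    qed
    have "P*((exp u - exp (-u))/2) - k*((exp u + exp (-u))/2 - 1) = (t-1)*(P*(t+1) - k*(t-1)) / (2*t)"
      unfolding em t_def[symmetric] using t1 by (simp add: field_simps power2_eq_square)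
    thus ?thesis using aff t1 by simp
  qed
  have cont: "continuous_on {a..b} g" for a b
    using der by (meson DERIV_isCont continuous_at_imp_continuous_on)
  fix u assume u: "0 < u" "u < L"
  have ex: "\<exists>y. DERIV g x :> y \<and> y > 0" if "0 < x" "x \<le> L" for x
    using der[of x] derpos[OF that] by blast
  have "g 0 < g u"
    by (rule DERIV_pos_imp_increasing_open[OF u(1)]) (use ex u cont in auto)
  moreover have "g u < g L"
    by (rule DERIV_pos_imp_increasing_open[OF u(2)]) (use ex u cont in auto)
  ultimately show "0 < g u \<and> g u < c" using gL \<open>g 0 = 0\<close> by simp
qed

lemma phi_ident:
  fixes th r s c lam a x1 x2 y :: real
  assumes th: "th > 0" and r: "r > 0"
  defines "P \<equiv> (a-lam)*x2 - c - (x1-s)/r + lam*x1"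
  defines "k \<equiv> ((1 - lam*r)/r)/th"
  defines "u \<equiv> th*(y - x1)"
  shows "phi1 r th s c lam a x1 x2 y - lam*y =
     (a-lam)*x2 - c + (P*((exp u + exp (-u))/2 - 1) - k*((exp u - exp (-u))/2 - u))"
proof -
  have e1: "exp (th*y) = exp (th*x1) * exp u" unfolding u_def by (simp add: algebra_simps flip: exp_add)
  have e2: "exp (-th*y) = exp (-th*x1) * exp (-u)" unfolding u_def by (simp add: algebra_simps flip: exp_add)
  have yu: "y = x1 + u/th" unfolding u_def using th by simp
  define E where "E = exp (th*x1)"
  have E0: "E > 0" unfolding E_def by simp
  have e4: "exp (-th*x1) = 1/E" unfolding E_def by (simp add: exp_minus inverse_eq_divide)
  show ?thesis unfolding phi1_def C11_def C12_def e1 e2 e4 E_def[symmetric] P_def k_def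
    using th r E0 by (subst (2) yu, subst yu) (simp add: field_simps)
qed

theorem lemmaA3:
  fixes r \<sigma> s c lam a q d gam b th w :: real
  assumes pos: "r > 0" "\<sigma> > 0" "s > 0" "c > 0" "lam > 0" "a > 0" "q > 0" "d > 0" "gam > 0" "b > 0"
    and "a < lam" and "b < gam" and "1 - lam*r > 0" and "1 - b*r > 0"
    and th_def: "th = sqrt (2*r/\<sigma>^2)"
    and "w > 1" and "Gfun r th s c lam a q d gam b w = 0"
    and "(1 - lam*r)*(w - w*ln w - 1) + c*r*th*w > 0"
  shows "(\<forall>x. let x1 = xbar1 r th q d gam b w; x2 = xbar2 r th q d gam b w;
                 V = W1 r th s c lam a x1 x2;
                 \<delta>x = (if x \<le> x2 then x2 - x else 0)
             in \<delta>x \<ge> 0 \<and>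
                (\<forall>\<delta>\<ge>0. \<delta> \<noteq> \<delta>x \<longrightarrow> V (x + \<delta>) - c - lam*\<delta> < V (x + \<delta>x) - c - lam*\<delta>x)) \<and>
     {x. Mop (W1 r th s c lam a (xbar1 r th q d gam b w) (xbar2 r th q d gam b w)) c lam x
             - W1 r th s c lam a (xbar1 r th q d gam b w) (xbar2 r th q d gam b w) x < 0}
           = {xbar1 r th q d gam b w<..} \<and>
     {x. Mop (W1 r th s c lam a (xbar1 r th q d gam b w) (xbar2 r th q d gam b w)) c lam x
             - W1 r th s c lam a (xbar1 r th q d gam b w) (xbar2 r th q d gam b w) x = 0}
           = {..xbar1 r th q d gam b w}"
proof -
  define x1 where "x1 = xbar1 r th q d gam b w"
  define x2 where "x2 = xbar2 r th q d gam b w"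
  define L where "L = ln w"
  have r: "r > 0" using pos by simp
  have th: "th > 0" using th_def pos by simp
  have ar: "1 - a*r > 0" using \<open>a < lam\<close> \<open>1 - lam*r > 0\<close> r
    by (smt (verit) mult_strict_right_mono)
  have L0: "L > 0" using \<open>w > 1\<close> L_def by simp
  have x1def: "x1 = x2 - L/th" unfolding x1_def x2_def L_def xbar1_def by simp
  have x12: "x1 < x2" using x1def L0 th by simp
  define N where "N = (1 - lam*r) * ((ln w - 1) * w^2 + ln w + 1) - c*r*th*(w^2 + 1)"
  have G: "Gfun r th s c lam a q d gam b w = N/(th*(1 - a*r)*(w - 1)^2) + s/(1 - a*r) - x2"
    unfolding Gfun_def x2_def xbar2_def N_def by simp
  have x2v: "x2 = N/(th*(1 - a*r)*(w - 1)^2) + s/(1 - a*r)"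
    using G \<open>Gfun r th s c lam a q d gam b w = 0\<close> by simp
  define k where "k = ((1 - lam*r)/r)/th"
  have k0: "k > 0" unfolding k_def using th r \<open>1 - lam*r > 0\<close> by simp
  define P where "P = (a-lam)*x2 - c - (x1-s)/r + lam*x1"
  have wn: "w - 1 \<noteq> 0" "w \<noteq> 0" using \<open>w > 1\<close> by auto
  have Pv: "P = (2*c*w + k*(w^2 - 1 - 2*L*w)) / (w-1)^2"
  proof -
    have s1: "P = -((1-a*r)*x2)/r + s/r - c + k*L"
      unfolding P_def x1def k_def using th r by (simp add: field_simps)
    have s2: "(1-a*r)*x2 = N/(th*(w-1)^2) + s"
    proof -
      have n1: "1 - a*r \<noteq> 0" using ar by simp
      have n2: "th*(w-1)^2 \<noteq> 0" using th wn by simp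
      have "(1-a*r)*x2 = (1-a*r)*(N/(th*(1-a*r)*(w-1)^2)) + (1-a*r)*(s/(1-a*r))"
        unfolding x2v by (simp add: distrib_left)
      also have "(1-a*r)*(N/(th*(1-a*r)*(w-1)^2)) = N/(th*(w-1)^2)"
        using n1 n2 by (simp add: field_simps)
      also have "(1-a*r)*(s/(1-a*r)) = s" using n1 by simp
      finally show ?thesis .
    qed
    have s4: "N/(r*th) = k*((L-1)*w^2+L+1) - c*(w^2+1)"
      unfolding N_def k_def L_def using th r by (simp add: field_simps)
    have s3: "P = -(N/(r*th))/(w-1)^2 - c + k*L"
      unfolding s1 s2 using th r wn by (simp add: field_simps)
    have w2: "(w-1)^2 \<noteq> 0" using wn by simp
    show ?thesis unfolding s3 s4 using w2
      by (simp add: field_simps) (simp add: algebra_simps power2_eq_square)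
  qed
  have hyp: "c*w + k*(w - w*L - 1) > 0"
  proof -
    have "c*w + k*(w - w*L - 1) = ((1 - lam*r)*(w - w*ln w - 1) + c*r*th*w)/(r*th)"
      unfolding k_def L_def using th r by (simp add: field_simps)
    thus ?thesis using assms(18) th r by simp
  qed
  define g where "g = (\<lambda>u. P*((exp u + exp (-u))/2 - 1) - k*((exp u - exp (-u))/2 - u))"
  have gb: "0 < g u \<and> g u < c" if "0 < u" "u < L" for u
    using g_bounds(3)[OF \<open>w > 1\<close> L_def k0 \<open>c > 0\<close> Pv hyp that] unfolding g_def by simp
  define V where "V = W1 r th s c lam a x1 x2"
  define h where "h = (\<lambda>y. V y - lam*y)"
  define M where "M = (a-lam)*x2"
  have h1: "h y = (a-lam)*y" if "y \<ge> x2" for y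
    using that unfolding h_def V_def W1_def by (simp add: algebra_simps)
  have h2: "h y = M - c" if "y \<le> x1" for y
    using that x12 unfolding h_def V_def W1_def M_def by (simp add: algebra_simps)
  have h3: "M - c < h y \<and> h y < M" if "x1 < y" "y < x2" for y
  proof -
    have "h y = phi1 r th s c lam a x1 x2 y - lam*y"
      using that unfolding h_def V_def W1_def by simp
    also have "\<dots> = M + (- c + g (th*(y-x1)))"
      unfolding phi_ident[OF th r] M_def g_def P_def k_def by simp
    finally have e: "h y = M + (- c + g (th*(y-x1)))" .
    have "0 < th*(y-x1)" using th that by simp
    moreover have "th*(y-x1) < L" using that x1def th by (simp add: field_simps)
    ultimately show ?thesis using gb e by fastforce
  qed
  have hM: "h x2 = M" using h1 M_def by simp
  have hlt: "h y < M" if "y \<noteq> x2" for y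
  proof (cases "y \<ge> x2")
    case True
    then have "y > x2" using that by simp
    thus ?thesis using h1[OF True] M_def \<open>a < lam\<close>
      by (simp add: mult_strict_left_mono_neg)
  next
    case False
    then show ?thesis using h2 h3 \<open>c > 0\<close> by (cases "y \<le> x1") fastforce+
  qed
  define dx where "dx = (\<lambda>x::real. if x \<le> x2 then x2 - x else 0)"
  have dx0: "dx x \<ge> 0" for x unfolding dx_def by simp
  have opt: "h (x + \<delta>) < h (x + dx x)" if "\<delta> \<ge> 0" "\<delta> \<noteq> dx x" for x \<delta>
  proof (cases "x \<le> x2")
    case True
    then have "x + dx x = x2" unfolding dx_def by simp
    moreover have "x + \<delta> \<noteq> x2" using that True unfolding dx_def by auto
    ultimately show ?thesis using hlt hM by simp
  next
    case False
    then have "dx x = 0" unfolding dx_def by simp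
    then have "\<delta> > 0" using that by simp
    hence "(a-lam)*(x+\<delta>) < (a-lam)*x" using \<open>a < lam\<close> by (simp add: mult_strict_left_mono_neg)
    then show ?thesis using h1 False \<open>dx x = 0\<close> that by simp
  qed
  have optV: "V (x + \<delta>) - c - lam*\<delta> < V (x + dx x) - c - lam*dx x"
    if "\<delta> \<ge> 0" "\<delta> \<noteq> dx x" for x \<delta>
    using opt[OF that] unfolding h_def by (simp add: algebra_simps)
  have Mv: "Mop V c lam x = V (x + dx x) - c - lam*dx x" for x
    unfolding Mop_def
  proof (rule cSup_eq_maximum)
    show "V (x + dx x) - c - lam * dx x \<in> (\<lambda>\<delta>. V (x + \<delta>) - c - lam * \<delta>) ` {0..}"
      using dx0 by auto
    show "\<And>y. y \<in> (\<lambda>\<delta>. V (x + \<delta>) - c - lam * \<delta>) ` {0..} \<Longrightarrow> y \<le> V (x + dx x) - c - lam * dx x"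
      using optV by (smt (verit, ccfv_SIG) atLeast_iff imageE)
  qed
  have diff: "Mop V c lam x - V x = h (x + dx x) - h x - c" for x
    unfolding Mv h_def by (simp add: algebra_simps)
  have neg: "Mop V c lam x - V x < 0" if "x > x1" for x
  proof (cases "x \<le> x2")
    case True
    then have "x + dx x = x2" unfolding dx_def by simp
    moreover have "h x > M - c"
      using True that h3 h1 hM \<open>c > 0\<close> by (cases "x = x2") auto
    ultimately show ?thesis using diff hM by simp
  next
    case False
    then show ?thesis using diff \<open>c > 0\<close> unfolding dx_def by simp
  qed
  have zero: "Mop V c lam x - V x = 0" if "x \<le> x1" for x
  proof -
    have "x + dx x = x2" using that x12 unfolding dx_def by simp
    thus ?thesis using diff hM h2[OF that] by simp
  qed
  have A: "\<forall>x. 0 \<le> (if x \<le> x2 then x2 - x else 0) \<and>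
      (\<forall>\<delta>\<ge>0. \<delta> \<noteq> (if x \<le> x2 then x2 - x else 0) \<longrightarrow>
          V (x + \<delta>) - c - lam * \<delta>
          < V (x + (if x \<le> x2 then x2 - x else 0)) - c - lam * (if x \<le> x2 then x2 - x else 0))"
    using dx0 optV unfolding dx_def by auto
  have B: "{x. Mop V c lam x - V x < 0} = {x1<..}"
  proof (rule set_eqI, rule iffI)
    fix x assume "x \<in> {x. Mop V c lam x - V x < 0}"
    then show "x \<in> {x1<..}" using zero[of x] by (cases "x \<le> x1") auto
  next
    fix x assume "x \<in> {x1<..}" then show "x \<in> {x. Mop V c lam x - V x < 0}" using neg by simp
  qed
  have C: "{x. Mop V c lam x - V x = 0} = {..x1}"
  proof (rule set_eqI, rule iffI)
    fix x assume "x \<in> {x. Mop V c lam x - V x = 0}"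
    then show "x \<in> {..x1}" using neg[of x] by (cases "x \<le> x1") auto
  next
    fix x assume "x \<in> {..x1}" then show "x \<in> {x. Mop V c lam x - V x = 0}" using zero by simp
  qed
  show ?thesis
    unfolding x1_def[symmetric] x2_def[symmetric] V_def[symmetric] Let_def
    using A B C by blast
qed

end
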